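(* Let $G$ be a finite group with $d(G) \geq 2$. Then $\mathrm{Cyc}(G)$ is the smallest normal subgroup $N$ of $G$ such that $\mathrm{Cyc}(G/N)$ is trivial; that is, $\mathrm{Cyc}(G/\mathrm{Cyc}(G))=1$, and $\mathrm{Cyc}(G) \leq N$ for every normal subgroup $N$ of $G$ with $\mathrm{Cyc}(G/N)=1$.
   Context: For a finite group $H$, $d(H)$ denotes the minimal size of a generating set of $H$. The cycliciser of a group $H$ is $\mathrm{Cyc}(H) = \{c \in H \mid \langle c,h\rangle \text{ is cyclic for all } h \in H\}$; for finite $H$ it is a normal subgroup of $H$. *)

theory Defs
  imports "HOL-Algebra.Algebra"
begin

definition min_gen_size :: "('a, 'b) monoid_scheme \<Rightarrow> nat" where
  "min_gen_size G = (LEAST n. \<exists>S. S \<subseteq> carrier G \<and> finite S \<and> card S = n \<and> generate G S = carrier G)"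

definition cyclic_in :: "('a, 'b) monoid_scheme \<Rightarrow> 'a set \<Rightarrow> bool" where
  "cyclic_in G H = (\<exists>g \<in> carrier G. H = generate G {g})"

definition cycliciser :: "('a, 'b) monoid_scheme \<Rightarrow> 'a set" where
  "cycliciser G = {c \<in> carrier G. \<forall>h \<in> carrier G. cyclic_in G (generate G {c, h})}"

end

theory Submission
  imports Defs
begin

context group
begin

lemma two_pow_cyclic:
  assumes w: "w \<in> carrier G" and a: "a \<in> generate G {w}" and b: "b \<in> generate G {w}"
  shows "cyclic_in G (generate G {a, b})"
proof -
  obtain i where i: "a = w [^] (i::int)" using a generate_pow[OF w] by auto
  obtain j where j: "b = w [^] (j::int)" using b generate_pow[OF w] by auto
  define d where "d = gcd i j"
  define g where "g = w [^] d"
  have gc: "g \<in> carrier G" using w g_def by simp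
  have ac: "a \<in> carrier G" and bc: "b \<in> carrier G" using i j w by auto
  obtain u v where uv: "u * i + v * j = d" using bezout_int d_def by blast
  have "g = a [^] u \<otimes> b [^] v"
    using w by (simp add: g_def i j int_pow_pow int_pow_mult flip: uv) (simp add: mult.commute)
  moreover have "a [^] u \<in> generate G {a, b}"
    using subgroup_int_pow_closed[OF generate_is_subgroup generate.incl[of a "{a,b}"]] ac bc by auto
  moreover have "b [^] v \<in> generate G {a, b}"
    using subgroup_int_pow_closed[OF generate_is_subgroup generate.incl[of b "{a,b}"]] ac bc by auto
  ultimately have "g \<in> generate G {a, b}"
    using generate.eng by metis
  hence 1: "generate G {g} \<subseteq> generate G {a, b}"
    using generate_subgroup_incl[OF _ generate_is_subgroup] ac bc by auto
  have "a = g [^] (i div d)"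
    using w by (simp add: g_def i int_pow_pow d_def)
  hence "a \<in> generate G {g}" using generate_pow[OF gc] by auto
  moreover have "b = g [^] (j div d)"
    using w by (simp add: g_def j int_pow_pow d_def)
  hence "b \<in> generate G {g}" using generate_pow[OF gc] by auto
  ultimately have 2: "generate G {a, b} \<subseteq> generate G {g}"
    using generate_subgroup_incl[OF _ generate_is_subgroup] gc by auto
  show ?thesis unfolding cyclic_in_def using 1 2 gc by blast
qed


lemma cyc_sub:
  assumes w: "w \<in> carrier G" and "generate G {a, b} \<subseteq> generate G {w}"
    and "a \<in> carrier G" "b \<in> carrier G"
  shows "cyclic_in G (generate G {a, b})"
  using two_pow_cyclic[OF w] assms generate.incl[of _ "{a,b}" G] by blast

lemma cyc_memD:
  assumes "c \<in> cycliciser G" "h \<in> carrier G"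
  obtains w where "w \<in> carrier G" "generate G {c, h} = generate G {w}"
  using assms unfolding cycliciser_def cyclic_in_def by blast

lemma cyc_carrier: "cycliciser G \<subseteq> carrier G"
  unfolding cycliciser_def by auto

lemma one_cyc: "\<one> \<in> cycliciser G"
proof -
  have "cyclic_in G (generate G {\<one>, h})" if h: "h \<in> carrier G" for h
  proof (rule two_pow_cyclic[OF h])
    show "\<one> \<in> generate G {h}" by (rule generate.one)
    show "h \<in> generate G {h}" by (rule generate.incl) simp
  qed
  thus ?thesis unfolding cycliciser_def by auto
qed

lemma cyc_comm:
  assumes c: "c \<in> cycliciser G" and h: "h \<in> carrier G"
  shows "c \<otimes> h = h \<otimes> c"
proof -
  obtain w where w: "w \<in> carrier G" "generate G {c, h} = generate G {w}"
    using cyc_memD[OF c h] .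
  have "c \<in> generate G {w}" "h \<in> generate G {w}"
    using w(2) generate.incl[of _ "{c,h}" G] by auto
  then obtain i j where "c = w [^] (i::int)" "h = w [^] (j::int)"
    using generate_pow[OF w(1)] by auto
  thus ?thesis using w(1) by (simp add: int_pow_mult[symmetric] add.commute)
qed

lemma cyc_subgroup: "subgroup (cycliciser G) G"
proof (rule subgroupI)
  show "cycliciser G \<subseteq> carrier G" by (rule cyc_carrier)
  show "cycliciser G \<noteq> {}" using one_cyc by auto
next
  fix c assume c: "c \<in> cycliciser G"
  have cc: "c \<in> carrier G" using c cyc_carrier by auto
  have "cyclic_in G (generate G {inv c, h})" if h: "h \<in> carrier G" for h
  proof -
    obtain w where w: "w \<in> carrier G" "generate G {c, h} = generate G {w}"
      using cyc_memD[OF c h] .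
    have "inv c \<in> generate G {c, h}" "h \<in> generate G {c,h}"
      using generate.inv[of c "{c,h}" G] generate.incl[of _ "{c,h}" G] by auto
    thus ?thesis using two_pow_cyclic[OF w(1)] w(2) by auto
  qed
  thus "inv c \<in> cycliciser G" unfolding cycliciser_def using cc by auto
next
  fix c1 c2 assume c1: "c1 \<in> cycliciser G" and c2: "c2 \<in> cycliciser G"
  have cc: "c1 \<in> carrier G" "c2 \<in> carrier G" using c1 c2 cyc_carrier by auto
  have "cyclic_in G (generate G {c1 \<otimes> c2, h})" if h: "h \<in> carrier G" for h
  proof -
    obtain y where y: "y \<in> carrier G" "generate G {c2, h} = generate G {y}"
      using cyc_memD[OF c2 h] .
    obtain w where w: "w \<in> carrier G" "generate G {c1, y} = generate G {w}"
      using cyc_memD[OF c1 y(1)] .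
    have sub: "subgroup (generate G {w}) G" using w(1) generate_is_subgroup by auto
    have "y \<in> generate G {w}" "c1 \<in> generate G {w}"
      using w(2) generate.incl[of _ "{c1,y}" G] by auto
    hence "generate G {y} \<subseteq> generate G {w}"
      using generate_subgroup_incl[OF _ sub] by auto
    moreover have "c2 \<in> generate G {y}" "h \<in> generate G {y}"
      using y(2) generate.incl[of _ "{c2,h}" G] by auto
    ultimately have "c2 \<in> generate G {w}" "h \<in> generate G {w}" by auto
    with \<open>c1 \<in> generate G {w}\<close> have "c1 \<otimes> c2 \<in> generate G {w}"
      using subgroup.m_closed[OF sub] by auto
    thus ?thesis using two_pow_cyclic[OF w(1)] \<open>h \<in> generate G {w}\<close> by auto
  qed
  thus "c1 \<otimes> c2 \<in> cycliciser G" unfolding cycliciser_def using cc by auto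
qed

lemma cyc_normal: "cycliciser G \<lhd> G"
  unfolding normal_inv_iff
proof (intro conjI ballI cyc_subgroup)
  fix x c assume x: "x \<in> carrier G" and c: "c \<in> cycliciser G"
  have cc: "c \<in> carrier G" using c cyc_carrier by auto
  have "x \<otimes> c \<otimes> inv x = c \<otimes> x \<otimes> inv x" using cyc_comm[OF c x] by simp
  also have "\<dots> = c" using x cc by (simp add: m_assoc)
  finally show "x \<otimes> c \<otimes> inv x \<in> cycliciser G" using c by simp
qed

end

lemma gen_sub:
  assumes "group G" "b \<in> carrier G" "a \<in> generate G {b}"
  shows "generate G {a} \<subseteq> generate G {b}"
  using group.generate_subgroup_incl[OF assms(1) _ group.generate_is_subgroup[OF assms(1)]] assms
  by auto

lemma quot_hom:
  assumes "N \<lhd> G"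
  shows "group_hom G (G Mod N) (\<lambda>a. N #>\<^bsub>G\<^esub> a)"
  unfolding group_hom_def group_hom_axioms_def
  using assms normal.r_coset_hom_Mod normal.factorgroup_is_group normal_def by blast

lemma (in group) part2:
  assumes Nn: "N \<lhd> G" and N1: "cycliciser (G Mod N) = {N}"
  shows "cycliciser G \<subseteq> N"
proof
  fix c assume c: "c \<in> cycliciser G"
  have Ns: "subgroup N G" using Nn normal_def by blast
  have cc: "c \<in> carrier G" using c cyc_carrier by auto
  have hom: "group_hom G (G Mod N) (\<lambda>a. N #> a)" using quot_hom[OF Nn] .
  have Cc: "N #> c \<in> carrier (G Mod N)" unfolding carrier_FactGroup using cc by (rule imageI)
  have "cyclic_in (G Mod N) (generate (G Mod N) {N #> c, H})"
    if H: "H \<in> carrier (G Mod N)" for H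
  proof -
    obtain h where h: "h \<in> carrier G" "H = N #> h" using H unfolding carrier_FactGroup by (rule imageE)
    obtain w where w: "w \<in> carrier G" "generate G {c, h} = generate G {w}"
      using cyc_memD[OF c h(1)] .
    have "generate (G Mod N) {N #> c, H} = (\<lambda>a. N #> a) ` generate G {c, h}"
      using group_hom.generate_img[OF hom, of "{c, h}"] cc h by simp
    also have "\<dots> = generate (G Mod N) {N #> w}"
      using group_hom.generate_img[OF hom, of "{w}"] w by simp
    finally have e: "generate (G Mod N) {N #> c, H} = generate (G Mod N) {N #> w}" .
    have "N #> w \<in> carrier (G Mod N)" unfolding carrier_FactGroup using w(1) by (rule imageI)
    with e show ?thesis unfolding cyclic_in_def by blast
  qed
  hence "N #> c \<in> cycliciser (G Mod N)"
    unfolding cycliciser_def using Cc by blast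
  hence "N #> c = N" using N1 by simp
  thus "c \<in> N" using rcos_self[OF cc Ns] by simp
qed

lemma (in group) part1:
  shows "cycliciser (G Mod (cycliciser G)) = {cycliciser G}"
proof -
  define Z where "Z = cycliciser G"
  have Zn: "Z \<lhd> G" unfolding Z_def by (rule cyc_normal)
  have Qg: "group (G Mod Z)" using Zn by (rule normal.factorgroup_is_group)
  have hom: "group_hom G (G Mod Z) (\<lambda>a. Z #> a)" using quot_hom[OF Zn] .
  have Zs: "subgroup Z G" using Zn normal_def by blast
  have "cycliciser (G Mod Z) \<subseteq> {Z}"
  proof
    fix XX assume XX: "XX \<in> cycliciser (G Mod Z)"
    have "XX \<in> carrier (G Mod Z)" using XX group.cyc_carrier[OF Qg] by blast
    then obtain g where g: "g \<in> carrier G" "XX = Z #> g"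
      unfolding carrier_FactGroup by (rule imageE)
    have "cyclic_in G (generate G {g, h})" if h: "h \<in> carrier G" for h
    proof -
      have Hc: "Z #> h \<in> carrier (G Mod Z)" unfolding carrier_FactGroup using h by (rule imageI)
      obtain Y where Y: "Y \<in> carrier (G Mod Z)"
        "generate (G Mod Z) {XX, Z #> h} = generate (G Mod Z) {Y}"
        using group.cyc_memD[OF Qg XX Hc] .
      obtain y where y: "y \<in> carrier G" "Y = Z #> y"
        using Y(1) unfolding carrier_FactGroup by (rule imageE)
      have gen: "generate (G Mod Z) {XX, Z #> h} = (\<lambda>a. Z #> a) ` generate G {y}"
        using Y(2) y group_hom.generate_img[OF hom, of "{y}"] by simp
      have i1: "XX \<in> generate (G Mod Z) {XX, Z #> h}"
        by (rule generate.incl) simp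
      have i2: "Z #> h \<in> generate (G Mod Z) {XX, Z #> h}"
        by (rule generate.incl) simp
      have "Z #> g \<in> (\<lambda>a. Z #> a) ` generate G {y}"
        using i1 gen g(2) by simp
      then obtain g' where g': "g' \<in> generate G {y}" "Z #> g = Z #> g'"
        by blast
      have "Z #> h \<in> (\<lambda>a. Z #> a) ` generate G {y}"
        using i2 gen by simp
      then obtain h' where h': "h' \<in> generate G {y}" "Z #> h = Z #> h'"
        by blast
      have "g \<in> Z #> g'" using repr_independenceD[OF Zs g(1) g'(2)[symmetric]] .
      then obtain z1 where z1: "z1 \<in> Z" "g = z1 \<otimes> g'" unfolding r_coset_def by blast
      have "h \<in> Z #> h'" using repr_independenceD[OF Zs h h'(2)[symmetric]] .
      then obtain z2 where z2: "z2 \<in> Z" "h = z2 \<otimes> h'" unfolding r_coset_def by blast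
      have z1c: "z1 \<in> cycliciser G" "z2 \<in> cycliciser G" using z1 z2 Z_def by auto
      obtain w1 where w1: "w1 \<in> carrier G" "generate G {z1, y} = generate G {w1}"
        using cyc_memD[OF z1c(1) y(1)] .
      obtain w2 where w2: "w2 \<in> carrier G" "generate G {z2, w1} = generate G {w2}"
        using cyc_memD[OF z1c(2) w1(1)] .
      have sub: "subgroup (generate G {w2}) G" using w2(1) generate_is_subgroup by auto
      have in2: "z2 \<in> generate G {w2}" "w1 \<in> generate G {w2}"
        using w2(2) generate.incl[of _ "{z2, w1}" G] by auto
      have in1: "z1 \<in> generate G {w1}" "y \<in> generate G {w1}"
        using w1(2) generate.incl[of _ "{z1, y}" G] by auto
      have s21: "generate G {w1} \<subseteq> generate G {w2}"
        using gen_sub[OF is_group w2(1) in2(2)] .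
      have s1y: "generate G {y} \<subseteq> generate G {w1}"
        using gen_sub[OF is_group w1(1) in1(2)] .
      have "z1 \<in> generate G {w2}" "g' \<in> generate G {w2}" "h' \<in> generate G {w2}"
        using in1 s21 s1y g'(1) h'(1) by auto
      hence "g \<in> generate G {w2}" "h \<in> generate G {w2}"
        using z1(2) z2(2) in2(1) subgroup.m_closed[OF sub] by auto
      thus ?thesis using two_pow_cyclic[OF w2(1)] by auto
    qed
    hence "g \<in> Z" unfolding Z_def cycliciser_def using g(1) by blast
    thus "XX \<in> {Z}" using g(2) subgroup.rcos_const[OF Zs is_group] by simp
  qed
  moreover have "Z \<in> cycliciser (G Mod Z)" using group.one_cyc[OF Qg] by simp
  ultimately show ?thesis unfolding Z_def by auto
qed

theorem lemma2p2:
  fixes G :: "('a, 'b) monoid_scheme"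
  assumes "group G" and "finite (carrier G)" and "min_gen_size G \<ge> 2"
  shows "cycliciser (G Mod (cycliciser G)) = {\<one>\<^bsub>G Mod (cycliciser G)\<^esub>}
    \<and> (\<forall>N. N \<lhd> G \<and> cycliciser (G Mod N) = {\<one>\<^bsub>G Mod N\<^esub>} \<longrightarrow> cycliciser G \<subseteq> N)"
  using group.part1[OF assms(1)] group.part2[OF assms(1)] by simp

end
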